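(* Let $\mathcal{H}$ be the Hilbert space described in the context and $p\in[1,\infty)$. Let $\mu$ be a Borel probability measure on $\mathcal{H}$ such that for some $s>2p$, $$\widetilde{M}_s(\mu):=\int \Big(\sum_{j=1}^{\infty}\frac{1}{\lambda_j^2}\langle x, \psi_j\rangle^2_{L^2} \Big)^{\frac{s}{2}}\,\mu(dx) <\infty,$$ and assume there are constants $C>0$, $\gamma>1$ with $\lambda_j\le Cj^{-\gamma}$ for all $j\ge1$. Then $$\int_{\mathcal{H}} \|\mathrm{Proj}^d (x)-x\|^q_{\mathcal{H}}\,\mu(dx) \leq C d^{-\frac{q\gamma}{2}}$$ for all $d\geq 1$ and all $q\in [1,s]$, where the constant $C$ depends only on $q$ and $\widetilde{M}_s(\mu)$.
   Context: Let $(\Omega,m)$ be a measure space, $(\psi_j)_{j\ge1}$ an orthonormal basis of $L^2(\Omega,m)$ with inner product $\langle\cdot,\cdot\rangle_{L^2}$, and $(\lambda_j)_{j\ge1}$ a non-increasing sequence of positive numbers converging to $0$. Let $\mathcal{H}=\{f\in L^2(\Omega,m):\sum_j\langle f,\psi_j\rangle_{L^2}^2/\lambda_j<\infty\}$ with inner product $\langle f,g\rangle_{\mathcal{H}}=\sum_j\lambda_j^{-1}\langle f,\psi_j\rangle_{L^2}\langle g,\psi_j\rangle_{L^2}$ and norm $\|\cdot\|_{\mathcal{H}}$. $\mathrm{Proj}^d$ is the orthogonal projection onto $\mathrm{span}\{\sqrt{\lambda_j}\psi_j:j=1,\dots,d\}$. *)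

theory Defs
  imports "HOL-Analysis.Analysis" "HOL-Probability.Probability"
begin

text \<open>The ambient space L2(Omega,m) is modelled by an abstract real Hilbert space
  of type 'a; psi j (j \<ge> 1) is an orthonormal basis of it and lam j (j \<ge> 1) the
  eigenvalue sequence.\<close>

definition orthonormal_basis :: "(nat \<Rightarrow> 'a::{real_inner,complete_space}) \<Rightarrow> bool" where
  "orthonormal_basis psi \<longleftrightarrow>
     (\<forall>i\<ge>1. \<forall>j\<ge>1. inner (psi i) (psi j) = (if i = j then 1 else 0)) \<and>
     closure (span (psi ` {1..})) = UNIV"

definition eigen_seq :: "(nat \<Rightarrow> real) \<Rightarrow> bool" where
  "eigen_seq lam \<longleftrightarrow> (\<forall>j\<ge>1. lam j > 0) \<and> (\<forall>i\<ge>1. \<forall>j\<ge>i. lam j \<le> lam i)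
     \<and> (lam \<longlonglongrightarrow> 0)"

definition Hspace :: "(nat \<Rightarrow> 'a::real_inner) \<Rightarrow> (nat \<Rightarrow> real) \<Rightarrow> 'a set" where
  "Hspace psi lam = {f. summable (\<lambda>j. (inner f (psi (Suc j)))\<^sup>2 / lam (Suc j))}"

definition Hinner :: "(nat \<Rightarrow> 'a::real_inner) \<Rightarrow> (nat \<Rightarrow> real) \<Rightarrow> 'a \<Rightarrow> 'a \<Rightarrow> real" where
  "Hinner psi lam f g = (\<Sum>j. inner f (psi (Suc j)) * inner g (psi (Suc j)) / lam (Suc j))"

definition Hnorm :: "(nat \<Rightarrow> 'a::real_inner) \<Rightarrow> (nat \<Rightarrow> real) \<Rightarrow> 'a \<Rightarrow> real" where
  "Hnorm psi lam f = sqrt (Hinner psi lam f f)"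

definition Hdist :: "(nat \<Rightarrow> 'a::real_inner) \<Rightarrow> (nat \<Rightarrow> real) \<Rightarrow> 'a \<Rightarrow> 'a \<Rightarrow> real" where
  "Hdist psi lam f g = Hnorm psi lam (f - g)"

definition Hborel_sets :: "(nat \<Rightarrow> 'a::real_inner) \<Rightarrow> (nat \<Rightarrow> real) \<Rightarrow> 'a set set" where
  "Hborel_sets psi lam = sigma_sets (Hspace psi lam)
     {U. openin (Metric_space.mtopology (Hspace psi lam) (Hdist psi lam)) U}"

definition Proj :: "(nat \<Rightarrow> 'a::real_inner) \<Rightarrow> (nat \<Rightarrow> real) \<Rightarrow> nat \<Rightarrow> 'a \<Rightarrow> 'a" where
  "Proj psi lam d x = (THE p. p \<in> span ((\<lambda>j. sqrt (lam j) *\<^sub>R psi j) ` {1..d}) \<and>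
      (\<forall>v \<in> span ((\<lambda>j. sqrt (lam j) *\<^sub>R psi j) ` {1..d}). Hinner psi lam (x - p) v = 0))"

text \<open>The moment tilde M_s(mu); the integrand is +infinity where the series diverges.\<close>
definition Mtilde :: "(nat \<Rightarrow> 'a::real_inner) \<Rightarrow> (nat \<Rightarrow> real) \<Rightarrow> real \<Rightarrow> 'a measure \<Rightarrow> ennreal" where
  "Mtilde psi lam s mu = (\<integral>\<^sup>+ x. (let S = (\<lambda>j. (inner x (psi (Suc j)))\<^sup>2 / (lam (Suc j))\<^sup>2) in
       if summable S then ennreal ((suminf S) powr (s / 2)) else \<infinity>) \<partial>mu)"

end

theory Submission
  imports Defs
begin


lemma ennreal_aux1:
  fixes a c g :: ennreal
  assumes "c \<noteq> 0" "c \<noteq> \<top>" "a \<le> c * (1 + g)"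
  shows "a / c - 1 \<le> g"
proof -
  have "a / c \<le> c * (1 + g) / c" using assms(3) by (rule divide_right_mono_ennreal)
  also have "\<dots> = 1 + g" using assms(1,2) by (metis ennreal_mult_divide_eq mult.commute)
  finally have "a / c \<le> 1 + g" .
  then show ?thesis by (simp add: ennreal_minus_le_iff)
qed

lemma ennreal_aux2:
  fixes a c :: ennreal
  assumes "c \<noteq> 0" "c \<noteq> \<top>"
  shows "a \<le> c * (1 + (a / c - 1))"
proof -
  have "a / c \<le> 1 + (a / c - 1)"
    using ennreal_minus_le_iff[of "a/c" 1 "a/c - 1"] by simp
  then have "c * (a / c) \<le> c * (1 + (a / c - 1))" by (rule mult_left_mono) simp
  moreover have "c * (a / c) = a" using assms
    by (simp add: ennreal_times_divide ennreal_mult_divide_eq mult.commute)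
  ultimately show ?thesis by simp
qed

lemma nn_integral_affine_bound:
  fixes F g :: "'a \<Rightarrow> ennreal" and c :: ennreal
  assumes P: "prob_space M" and c: "c \<noteq> 0" "c \<noteq> \<top>"
    and le: "\<And>x. x \<in> space M \<Longrightarrow> F x \<le> c * (1 + g x)"
  shows "integral\<^sup>N M F \<le> c * (1 + integral\<^sup>N M g)"
proof -
  have "integral\<^sup>N M F \<le> (\<integral>\<^sup>+x. c * (1 + g x) \<partial>M)"
    using le by (rule nn_integral_mono)
  also have "\<dots> \<le> c * (1 + integral\<^sup>N M g)"
    unfolding nn_integral_def[of M "\<lambda>x. c * (1 + g x)"]
  proof (rule SUP_least)
    fix h assume "h \<in> {h. simple_function M h \<and> h \<le> (\<lambda>x. c * (1 + g x))}"
    then have sh: "simple_function M h" and hle: "\<And>x. h x \<le> c * (1 + g x)"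
      by (auto simp: le_fun_def)
    define h' where "h' x = h x / c - 1" for x
    have sh': "simple_function M h'"
      unfolding h'_def using sh by (rule simple_function_compose1)
    have h'g: "h' \<le> g" unfolding le_fun_def h'_def
      using hle c ennreal_aux1 by blast
    have A: "integral\<^sup>S M h \<le> (\<integral>\<^sup>S x. c * (1 + h' x) \<partial>M)"
      apply (rule simple_integral_mono[OF sh])
      using sh' apply (intro simple_function_mult simple_function_add) apply auto[3]
      unfolding h'_def using c ennreal_aux2 by blast
    have B: "(\<integral>\<^sup>S x. c * (1 + h' x) \<partial>M) = c * (\<integral>\<^sup>S x. 1 + h' x \<partial>M)"
      by (rule simple_integral_mult) (use sh' in auto)
    have C: "(\<integral>\<^sup>S x. 1 + h' x \<partial>M) = (\<integral>\<^sup>S x. 1 \<partial>M) + integral\<^sup>S M h'"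
      by (rule simple_integral_add) (use sh' in auto)
    have D: "(\<integral>\<^sup>S x. 1 \<partial>M) = 1"
      using P by (simp add: simple_integral_const prob_space.emeasure_space_1)
    have E: "integral\<^sup>S M h' \<le> integral\<^sup>N M g"
      unfolding nn_integral_def using sh' h'g by (auto intro!: SUP_upper)
    have "c * (1 + integral\<^sup>S M h') \<le> c * (1 + integral\<^sup>N M g)"
      using E by (intro mult_left_mono add_left_mono) auto
    then show "integral\<^sup>S M h \<le> c * (1 + integral\<^sup>N M g)"
      using A B C D by simp
  qed
  finally show ?thesis .
qed


definition ON :: "(nat \<Rightarrow> 'a::real_inner) \<Rightarrow> bool" where
  "ON psi \<longleftrightarrow> (\<forall>i\<ge>1. \<forall>j\<ge>1. inner (psi i) (psi j) = (if i = j then 1 else 0))"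

lemma span_repr:
  assumes on: "ON psi"
    and v: "v \<in> span ((\<lambda>j. sqrt (lam j) *\<^sub>R psi j) ` {1..d})"
  shows "v = (\<Sum>k\<in>{1..d}. inner v (psi k) *\<^sub>R psi k)"
proof -
  define R where "R v = (\<Sum>k\<in>{1..d}. inner v (psi k) *\<^sub>R psi k)" for v
  have Radd: "R (x + y) = R x + R y" for x y
    unfolding R_def by (simp add: inner_add_left scaleR_add_left sum.distrib)
  have Rscale: "R (a *\<^sub>R x) = a *\<^sub>R R x" for a x
    unfolding R_def by (simp add: scaleR_sum_right)
  have R0: "R 0 = 0" unfolding R_def by simp
  have sub: "subspace {v. v = R v}"
    unfolding subspace_def using Radd Rscale R0 by auto
  have gen: "R (psi j) = psi j" if "j \<in> {1..d}" for j
  proof -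
    have "R (psi j) = (\<Sum>k\<in>{1..d}. (if j = k then psi k else 0))"
      unfolding R_def using on that by (intro sum.cong) (auto simp: ON_def)
    also have "\<dots> = psi j" using that by (simp add: sum.delta)
    finally show ?thesis .
  qed
  have "v = R v"
    using v sub
  proof (rule span_induct[where P = "\<lambda>v. v = R v"])
    fix x assume "x \<in> (\<lambda>j. sqrt (lam j) *\<^sub>R psi j) ` {1..d}"
    then obtain j where "j \<in> {1..d}" "x = sqrt (lam j) *\<^sub>R psi j" by auto
    then show "x = R x" using gen Rscale by simp
  qed
  then show ?thesis unfolding R_def .
qed

lemma span_inner_out:
  assumes on: "ON psi"
    and v: "v \<in> span ((\<lambda>j. sqrt (lam j) *\<^sub>R psi j) ` {1..d})"
    and k: "d < k"
  shows "inner v (psi k) = 0"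
proof -
  have "inner v (psi k) = (\<Sum>i\<in>{1..d}. inner v (psi i) * inner (psi i) (psi k))"
    by (subst span_repr[OF on v]) (simp add: inner_sum_left)
  also have "\<dots> = 0" using on k by (intro sum.neutral) (auto simp: ON_def)
  finally show ?thesis .
qed

lemma inner_P:
  assumes on: "ON psi" and k: "k \<ge> 1"
  shows "inner (\<Sum>i\<in>{1..d}. inner x (psi i) *\<^sub>R psi i) (psi k) = (if k \<le> d then inner x (psi k) else 0)"
proof -
  have "inner (\<Sum>i\<in>{1..d}. inner x (psi i) *\<^sub>R psi i) (psi k)
      = (\<Sum>i\<in>{1..d}. (if i = k then inner x (psi k) else 0))"
    unfolding inner_sum_left using on k by (intro sum.cong) (auto simp: ON_def)
  also have "\<dots> = (if k \<le> d then inner x (psi k) else 0)"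
    using k by (simp add: sum.delta')
  finally show ?thesis .
qed

lemma Proj_eq:
  assumes on: "ON psi" and lam: "\<forall>j\<ge>1. lam j > 0"
  shows "Proj psi lam d x = (\<Sum>k\<in>{1..d}. inner x (psi k) *\<^sub>R psi k)"
proof -
  define V where "V = (\<lambda>j. sqrt (lam j) *\<^sub>R psi j) ` {1..d}"
  define P where "P = (\<Sum>k\<in>{1..d}. inner x (psi k) *\<^sub>R psi k)"
  have PV: "P \<in> span V"
    unfolding P_def
  proof (intro span_sum)
    fix k assume k: "k \<in> {1..d}"
    have e: "inner x (psi k) *\<^sub>R psi k = (inner x (psi k) / sqrt (lam k)) *\<^sub>R (sqrt (lam k) *\<^sub>R psi k)"
      using lam k by auto
    have b: "sqrt (lam k) *\<^sub>R psi k \<in> span V" unfolding V_def using k by (intro span_base) auto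
    show "inner x (psi k) *\<^sub>R psi k \<in> span V" by (subst e) (rule span_scale[OF b])
  qed
  have orth: "Hinner psi lam (x - P) v = 0" if v: "v \<in> span V" for v
  proof -
    have "(\<lambda>j. inner (x - P) (psi (Suc j)) * inner v (psi (Suc j)) / lam (Suc j)) = (\<lambda>j. 0)"
    proof
      fix j
      show "inner (x - P) (psi (Suc j)) * inner v (psi (Suc j)) / lam (Suc j) = 0"
      proof (cases "Suc j \<le> d")
        case True
        then show ?thesis unfolding P_def using inner_P[OF on, where k="Suc j" and d=d and x=x]
          by (simp add: inner_diff_left)
      next
        case False
        then show ?thesis using span_inner_out[OF on v[unfolded V_def], of "Suc j"] by simp
      qed
    qed
    then show ?thesis unfolding Hinner_def by simp
  qed
  have uniq: "p = P" if p: "p \<in> span V" "\<forall>v\<in>span V. Hinner psi lam (x - p) v = 0" for p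
  proof -
    have eq: "inner p (psi k) = inner x (psi k)" if k: "k \<in> {1..d}" for k
    proof -
      define v where "v = sqrt (lam k) *\<^sub>R psi k"
      have vV: "v \<in> span V" unfolding v_def V_def using k by (intro span_base) auto
      have lk: "lam k > 0" using lam k by auto
      have "(\<lambda>j. inner (x - p) (psi (Suc j)) * inner v (psi (Suc j)) / lam (Suc j))
          = (\<lambda>j. if j = k - 1 then inner (x - p) (psi k) * sqrt (lam k) / lam k else 0)"
      proof
        fix j
        show "inner (x - p) (psi (Suc j)) * inner v (psi (Suc j)) / lam (Suc j)
          = (if j = k - 1 then inner (x - p) (psi k) * sqrt (lam k) / lam k else 0)"
        proof (cases "j = k - 1")
          case True
          then have jk: "Suc j = k" using k by auto
          have "inner (psi k) (psi k) = 1" using on k unfolding ON_def by auto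
          then show ?thesis using True jk unfolding v_def by simp
        next
          case False
          then have jk: "Suc j \<noteq> k" using k by auto
          have "inner (psi k) (psi (Suc j)) = 0" using on k jk unfolding ON_def by auto
          then show ?thesis using False unfolding v_def by simp
        qed
      qed
      moreover have "(\<lambda>j. if j = k - 1 then inner (x - p) (psi k) * sqrt (lam k) / lam k else 0)
          sums (inner (x - p) (psi k) * sqrt (lam k) / lam k)"
        using sums_single[of "k - 1" "\<lambda>_. inner (x - p) (psi k) * sqrt (lam k) / lam k"] by simp
      ultimately have "Hinner psi lam (x - p) v = inner (x - p) (psi k) * sqrt (lam k) / lam k"
        unfolding Hinner_def by (simp add: sums_iff)
      then have "inner (x - p) (psi k) * sqrt (lam k) / lam k = 0" using p vV by simp
      then have "inner (x - p) (psi k) = 0" using lk by simp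
      then show ?thesis by (simp add: inner_diff_left)
    qed
    have "p = (\<Sum>k\<in>{1..d}. inner p (psi k) *\<^sub>R psi k)"
      using span_repr[OF on p(1)[unfolded V_def]] .
    also have "\<dots> = P" unfolding P_def by (rule sum.cong) (simp_all add: eq)
    finally show ?thesis .
  qed
  show ?thesis
    unfolding Proj_def P_def[symmetric] V_def[symmetric]
  proof (rule the_equality)
    show "P \<in> span V \<and> (\<forall>v\<in>span V. Hinner psi lam (x - P) v = 0)" using PV orth by blast
  next
    fix p assume "p \<in> span V \<and> (\<forall>v\<in>span V. Hinner psi lam (x - p) v = 0)"
    then show "p = P" using uniq by blast
  qed
qed


lemma pointwise:
  fixes C \<gamma> s q :: real and d :: nat
  assumes lam: "eigen_seq lam" and lamC: "\<forall>j\<ge>1. lam j \<le> C * real j powr (-\<gamma>)"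
    and C: "C > 0" and g: "\<gamma> > 1" and d: "d \<ge> 1" and q: "q \<ge> 1" "q \<le> s"
    and x: "x \<in> Hspace psi lam"
    and PI: "\<And>k. k \<ge> 1 \<Longrightarrow> inner (P - x) (psi k) = (if k \<le> d then 0 else - inner x (psi k))"
  shows "ennreal (Hnorm psi lam (P - x) powr q)
    \<le> ennreal (C powr (q/2) * real d powr (- q * \<gamma> / 2)) *
      (1 + (let S = (\<lambda>j. (inner x (psi (Suc j)))\<^sup>2 / (lam (Suc j))\<^sup>2) in
       if summable S then ennreal ((suminf S) powr (s / 2)) else \<infinity>))"
proof -
  have lpos: "\<And>j. j \<ge> 1 \<Longrightarrow> lam j > 0" and lmono: "\<And>i j. i \<ge> 1 \<Longrightarrow> i \<le> j \<Longrightarrow> lam j \<le> lam i"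
    using lam unfolding eigen_seq_def by auto
  define a where "a j = inner x (psi (Suc j))" for j
  define e where "e j = (if Suc j \<le> d then 0 else (a j)\<^sup>2 / lam (Suc j))" for j
  define T where "T j = (a j)\<^sup>2 / (lam (Suc j))\<^sup>2" for j
  define c0 where "c0 = C powr (q/2) * real d powr (- q * \<gamma> / 2)"
  have c0pos: "c0 > 0" unfolding c0_def using C d by simp
  have sx: "summable (\<lambda>j. (a j)\<^sup>2 / lam (Suc j))" using x unfolding Hspace_def a_def by simp
  have e_nonneg: "e j \<ge> 0" for j unfolding e_def using lpos[of "Suc j"] by simp
  have e_le: "e j \<le> (a j)\<^sup>2 / lam (Suc j)" for j unfolding e_def using lpos[of "Suc j"] by simp
  have se: "summable e"
    by (rule summable_comparison_test'[OF sx]) (use e_nonneg e_le in auto)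
  have Hin: "Hinner psi lam (P - x) (P - x) = suminf e"
    unfolding Hinner_def
  proof (rule suminf_cong)
    fix j show "inner (P - x) (psi (Suc j)) * inner (P - x) (psi (Suc j)) / lam (Suc j) = e j"
      using PI[of "Suc j"] unfolding e_def a_def by (auto simp: power2_eq_square)
  qed
  define H2 where "H2 = suminf e"
  have H2nn: "H2 \<ge> 0" unfolding H2_def using se e_nonneg by (rule suminf_nonneg)
  have Hq: "Hnorm psi lam (P - x) powr q = H2 powr (q/2)"
    unfolding Hnorm_def Hin H2_def[symmetric]
    using H2nn by (simp add: powr_half_sqrt[symmetric] powr_powr)
  define G where "G = (let S = (\<lambda>j. (inner x (psi (Suc j)))\<^sup>2 / (lam (Suc j))\<^sup>2) in
       if summable S then ennreal ((suminf S) powr (s / 2)) else \<infinity>)"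
  show ?thesis
  proof (cases "summable T")
    case False
    then have "G = \<infinity>" unfolding G_def T_def a_def by simp
    then show ?thesis unfolding G_def[symmetric] c0_def[symmetric] using c0pos
      by (simp add: ennreal_mult_top)
  next
    case True
    define S where "S = suminf T"
    have Tnn: "T j \<ge> 0" for j unfolding T_def by simp
    have Snn: "S \<ge> 0" unfolding S_def using True Tnn by (rule suminf_nonneg)
    have G: "G = ennreal (S powr (s/2))" unfolding G_def S_def T_def a_def using True
      unfolding T_def a_def by simp
    have ld: "lam (Suc d) \<le> C * real d powr (-\<gamma>)"
    proof -
      have "lam (Suc d) \<le> C * real (Suc d) powr (-\<gamma>)" using lamC by auto
      also have "\<dots> \<le> C * real d powr (-\<gamma>)"
        using C d g by (intro mult_left_mono powr_mono2') auto
      finally show ?thesis .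
    qed
    have eT: "e j \<le> lam (Suc d) * T j" for j
    proof (cases "Suc j \<le> d")
      case True then show ?thesis unfolding e_def T_def using lpos[of "Suc d"] by simp
    next
      case False
      have lj: "lam (Suc j) > 0" using lpos by simp
      have "e j = lam (Suc j) * T j" using False lj unfolding e_def T_def
        by (simp add: power2_eq_square field_simps)
      also have "\<dots> \<le> lam (Suc d) * T j" using False Tnn
        by (intro mult_right_mono lmono) auto
      finally show ?thesis .
    qed
    have "H2 \<le> suminf (\<lambda>j. lam (Suc d) * T j)" unfolding H2_def
      using eT se True by (intro suminf_le summable_mult) auto
    also have "\<dots> = lam (Suc d) * S" unfolding S_def using True by (simp add: suminf_mult)
    also have "\<dots> \<le> (C * real d powr (-\<gamma>)) * S" using ld Snn by (rule mult_right_mono)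
    finally have H2le: "H2 \<le> (C * real d powr (-\<gamma>)) * S" .
    have "H2 powr (q/2) \<le> ((C * real d powr (-\<gamma>)) * S) powr (q/2)"
      using H2le H2nn q by (intro powr_mono2) auto
    also have "\<dots> = c0 * S powr (q/2)"
      unfolding c0_def using C Snn
      by (simp add: powr_mult powr_powr mult_ac)
    also have "\<dots> \<le> c0 * (1 + S powr (s/2))"
    proof (rule mult_left_mono)
      show "S powr (q/2) \<le> 1 + S powr (s/2)"
      proof (cases "S \<le> 1")
        case True
        have "S powr (q/2) \<le> 1 powr (q/2)" using True Snn q by (intro powr_mono2) auto
        then have "S powr (q/2) \<le> 1" by simp
        moreover have "S powr (s/2) \<ge> 0" by simp
        ultimately show ?thesis by linarith
      next
        case False
        have "S powr (q/2) \<le> S powr (s/2)" using False q by (intro powr_mono) auto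
        then show ?thesis by simp
      qed
    qed (use c0pos in simp)
    finally have "Hnorm psi lam (P - x) powr q \<le> c0 * (1 + S powr (s/2))" using Hq by simp
    then have "ennreal (Hnorm psi lam (P - x) powr q) \<le> ennreal (c0 * (1 + S powr (s/2)))"
      by (rule ennreal_leI)
    also have "\<dots> = ennreal c0 * (1 + G)" unfolding G using c0pos
      by (simp add: ennreal_mult ennreal_plus)
    finally show ?thesis unfolding G_def c0_def .
  qed
qed

theorem lemma6p6:
  fixes C \<gamma> s p :: real
  assumes "p \<ge> 1" and "s > 2 * p" and "C > 0" and "\<gamma> > 1"
  shows "\<exists>K :: real \<Rightarrow> real \<Rightarrow> real.
    \<forall>(psi :: nat \<Rightarrow> 'a::{real_inner,complete_space}) (lam :: nat \<Rightarrow> real) (mu :: 'a measure).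
      orthonormal_basis psi \<and> eigen_seq lam \<and>
      (\<forall>j\<ge>1. lam j \<le> C * real j powr (-\<gamma>)) \<and>
      prob_space mu \<and> space mu = Hspace psi lam \<and> sets mu = Hborel_sets psi lam \<and>
      Mtilde psi lam s mu < \<infinity>
      \<longrightarrow> (\<forall>d::nat \<ge> 1. \<forall>q \<in> {1..s}.
            (\<integral>\<^sup>+ x. ennreal (Hnorm psi lam (Proj psi lam d x - x) powr q) \<partial>mu)
              \<le> ennreal (K q (enn2real (Mtilde psi lam s mu)) * real d powr (- q * \<gamma> / 2)))"
proof (intro exI[of _ "\<lambda>q m. C powr (q/2) * (1 + m)"] allI impI ballI)
  fix psi :: "nat \<Rightarrow> 'a::{real_inner,complete_space}" and lam :: "nat \<Rightarrow> real" and mu :: "'a measure"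
    and d :: nat and q :: real
  assume H: "orthonormal_basis psi \<and> eigen_seq lam \<and>
      (\<forall>j\<ge>1. lam j \<le> C * real j powr (-\<gamma>)) \<and>
      prob_space mu \<and> space mu = Hspace psi lam \<and> sets mu = Hborel_sets psi lam \<and>
      Mtilde psi lam s mu < \<infinity>"
    and d: "d \<ge> 1" and q: "q \<in> {1..s}"
  have on: "ON psi" using H unfolding orthonormal_basis_def ON_def by blast
  have lam: "eigen_seq lam" using H by blast
  have lpos: "\<forall>j\<ge>1. lam j > 0" using lam unfolding eigen_seq_def by blast
  have lamC: "\<forall>j\<ge>1. lam j \<le> C * real j powr (-\<gamma>)" using H by blast
  have P: "prob_space mu" and sp: "space mu = Hspace psi lam" and Mfin: "Mtilde psi lam s mu < \<infinity>"
    using H by blast+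
  define c0 where "c0 = C powr (q/2) * real d powr (- q * \<gamma> / 2)"
  have c0pos: "c0 > 0" unfolding c0_def using assms d by simp
  define g where "g x = (let S = (\<lambda>j. (inner x (psi (Suc j)))\<^sup>2 / (lam (Suc j))\<^sup>2) in
       if summable S then ennreal ((suminf S) powr (s / 2)) else \<infinity>)" for x
  have pw: "ennreal (Hnorm psi lam (Proj psi lam d x - x) powr q) \<le> ennreal c0 * (1 + g x)"
    if x: "x \<in> space mu" for x
  proof -
    define Px where "Px = (\<Sum>k\<in>{1..d}. inner x (psi k) *\<^sub>R psi k)"
    have PE: "Proj psi lam d x = Px" unfolding Px_def by (rule Proj_eq[OF on lpos])
    have PI: "inner (Px - x) (psi k) = (if k \<le> d then 0 else - inner x (psi k))" if "k \<ge> 1" for k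
      unfolding Px_def using inner_P[OF on that, where d=d and x=x]
      by (simp add: inner_diff_left)
    show ?thesis unfolding PE c0_def g_def
      using pointwise[OF lam lamC assms(3) assms(4) d, where q=q and s=s and x=x and P=Px and psi=psi] q x sp PI by auto
  qed
  have "(\<integral>\<^sup>+ x. ennreal (Hnorm psi lam (Proj psi lam d x - x) powr q) \<partial>mu)
      \<le> ennreal c0 * (1 + integral\<^sup>N mu g)"
    using P c0pos pw by (intro nn_integral_affine_bound) auto
  also have "integral\<^sup>N mu g = Mtilde psi lam s mu" unfolding Mtilde_def g_def ..
  also have "Mtilde psi lam s mu = ennreal (enn2real (Mtilde psi lam s mu))"
    using Mfin by simp
  also have "ennreal c0 * (1 + ennreal (enn2real (Mtilde psi lam s mu)))
      = ennreal (C powr (q/2) * (1 + enn2real (Mtilde psi lam s mu)) * real d powr (- q * \<gamma> / 2))"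
  proof -
    define m where "m = enn2real (Mtilde psi lam s mu)"
    have m0: "m \<ge> 0" unfolding m_def by simp
    have "C powr (q/2) * (1 + m) * real d powr (- q * \<gamma> / 2) = c0 * (1 + m)"
      unfolding c0_def by (simp add: mult_ac)
    moreover have "ennreal (c0 * (1 + m)) = ennreal c0 * (1 + ennreal m)"
      using c0pos m0 by (simp add: ennreal_mult ennreal_plus)
    ultimately show ?thesis unfolding m_def[symmetric] by metis
  qed
  finally show "(\<integral>\<^sup>+ x. ennreal (Hnorm psi lam (Proj psi lam d x - x) powr q) \<partial>mu)
      \<le> ennreal (C powr (q/2) * (1 + enn2real (Mtilde psi lam s mu)) * real d powr (- q * \<gamma> / 2))" .
qed

end
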